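(* Let $p\colon H\to K$ be a morphism of smooth 2-groups. Then the canonical functor $\kappa\colon\ker^{\mathtt h}(p)\to\mathrm{Cart}$ is a Grothendieck fibration in groupoids.
   Context: $\mathrm{Cart}$ is the category of manifolds diffeomorphic to some $\mathbb R^n$ with smooth maps. A functor $\pi\colon D\to C$ is a Grothendieck fibration in groupoids if every $f\colon c\to\pi(d)$ has a lift $\hat f\colon\hat c\to d$, and every morphism of $D$ is $\pi$-Cartesian (for $\zeta_{12}\colon d_1\to d_2$, $\zeta_{02}\colon d_0\to d_2$ and $f_{01}\colon\pi(d_0)\to\pi(d_1)$ with $\pi(\zeta_{12})f_{01}=\pi(\zeta_{02})$ there is a unique $\hat f_{01}$ over $f_{01}$ with $\zeta_{12}\hat f_{01}=\zeta_{02}$). Smooth 2-groups are group objects (with unit 1-morphism $u$, product, coherent associator and unitors, and $(\otimes,\mathrm{pr}_1)$ an equivalence) in the 2-category of categories equipped with a Grothendieck fibration in groupoids to $\mathrm{Cart}$, whose terminal object is $\mathrm{id}_{\mathrm{Cart}}$; morphisms are functors strictly over $\mathrm{Cart}$ with coherent monoidal structure. For $\pi_H\colon H\to\mathrm{Cart}$, $\ker^{\mathtt h}(p)$ is the homotopy pullback of $\mathrm{Cart}\xrightarrow{u_K}K\xleftarrow{p}H$: its objects are pairs $(h,\eta)$ with $h\in H$ and $\eta\colon p(h)\to u_K(\pi_H(h))$ an isomorphism in $K$ projecting to an identity, and its morphisms $(h_0,\eta_0)\to(h_1,\eta_1)$ are morphisms $\zeta\colon h_0\to h_1$ with $\eta_1\circ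 p(\zeta)=u_K(\pi_H(\zeta))\circ\eta_0$; $\kappa(h,\eta)=\pi_H(h)$, $\kappa(\zeta)=\pi_H(\zeta)$. *)

theory Defs
  imports "HOL-Analysis.Analysis"
begin

record ('o, 'm) category =
  obj :: "'o set"
  arr :: "'m set"
  dom :: "'m \<Rightarrow> 'o"
  cod :: "'m \<Rightarrow> 'o"
  ident :: "'o \<Rightarrow> 'm"
  comp :: "'m \<Rightarrow> 'm \<Rightarrow> 'm"   \<comment> \<open>comp C g f = g \<circ> f\<close>

definition hom :: "('o, 'm) category \<Rightarrow> 'o \<Rightarrow> 'o \<Rightarrow> 'm set" where
  "hom C a b = {f \<in> arr C. dom C f = a \<and> cod C f = b}"

definition is_category :: "('o, 'm) category \<Rightarrow> bool" where
  "is_category C \<longleftrightarrow>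
     (\<forall>f\<in>arr C. dom C f \<in> obj C \<and> cod C f \<in> obj C) \<and>
     (\<forall>a\<in>obj C. ident C a \<in> hom C a a) \<and>
     (\<forall>f\<in>arr C. \<forall>g\<in>arr C. cod C f = dom C g \<longrightarrow> comp C g f \<in> hom C (dom C f) (cod C g)) \<and>
     (\<forall>f\<in>arr C. comp C f (ident C (dom C f)) = f \<and> comp C (ident C (cod C f)) f = f) \<and>
     (\<forall>f\<in>arr C. \<forall>g\<in>arr C. \<forall>h\<in>arr C. cod C f = dom C g \<longrightarrow> cod C g = dom C h \<longrightarrow>
        comp C h (comp C g f) = comp C (comp C h g) f)"

definition is_iso :: "('o, 'm) category \<Rightarrow> 'm \<Rightarrow> bool" where
  "is_iso C f \<longleftrightarrow> f \<in> arr C \<and>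
     (\<exists>g\<in>hom C (cod C f) (dom C f). comp C g f = ident C (dom C f) \<and> comp C f g = ident C (cod C f))"

definition is_functor ::
  "('a, 'am) category \<Rightarrow> ('b, 'bm) category \<Rightarrow> ('a \<Rightarrow> 'b) \<Rightarrow> ('am \<Rightarrow> 'bm) \<Rightarrow> bool" where
  "is_functor C D Fo Fa \<longleftrightarrow>
     (\<forall>a\<in>obj C. Fo a \<in> obj D) \<and>
     (\<forall>f\<in>arr C. Fa f \<in> hom D (Fo (dom C f)) (Fo (cod C f))) \<and>
     (\<forall>a\<in>obj C. Fa (ident C a) = ident D (Fo a)) \<and>
     (\<forall>f\<in>arr C. \<forall>g\<in>arr C. cod C f = dom C g \<longrightarrow> Fa (comp C g f) = comp D (Fa g) (Fa f))"

definition fib_in_groupoids ::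
  "('d, 'dm) category \<Rightarrow> ('c, 'cm) category \<Rightarrow> ('d \<Rightarrow> 'c) \<Rightarrow> ('dm \<Rightarrow> 'cm) \<Rightarrow> bool" where
  "fib_in_groupoids D C po pa \<longleftrightarrow>
     is_functor D C po pa \<and>
     \<comment> \<open>existence of lifts\<close>
     (\<forall>d\<in>obj D. \<forall>c f. f \<in> hom C c (po d) \<longrightarrow>
        (\<exists>c' f'. f' \<in> hom D c' d \<and> pa f' = f)) \<and>
     \<comment> \<open>every morphism is cartesian\<close>
     (\<forall>z12\<in>arr D. \<forall>z02\<in>arr D. \<forall>f01.
        cod D z12 = cod D z02 \<longrightarrow>
        f01 \<in> hom C (po (dom D z02)) (po (dom D z12)) \<longrightarrow>
        comp C (pa z12) f01 = pa z02 \<longrightarrow>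
        (\<exists>!g. g \<in> hom D (dom D z02) (dom D z12) \<and> pa g = f01 \<and> comp D z12 g = z02))"

definition fibprod ::
  "('h, 'hm) category \<Rightarrow> ('h \<Rightarrow> 'c) \<Rightarrow> ('hm \<Rightarrow> 'cm) \<Rightarrow> ('h \<times> 'h, 'hm \<times> 'hm) category" where
  "fibprod H po pa =
     \<lparr> obj = {(x, y). x \<in> obj H \<and> y \<in> obj H \<and> po x = po y},
       arr = {(f, g). f \<in> arr H \<and> g \<in> arr H \<and> pa f = pa g},
       dom = (\<lambda>(f, g). (dom H f, dom H g)),
       cod = (\<lambda>(f, g). (cod H f, cod H g)),
       ident = (\<lambda>(x, y). (ident H x, ident H y)),
       comp = (\<lambda>(f', g') (f, g). (comp H f' f, comp H g' g)) \<rparr>"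

definition vert_nat_iso ::
  "('c, 'cm) category \<Rightarrow> ('a, 'am) category \<Rightarrow> ('d, 'dm) category \<Rightarrow>
   ('d \<Rightarrow> 'c) \<Rightarrow> ('dm \<Rightarrow> 'cm) \<Rightarrow>
   ('a \<Rightarrow> 'd) \<Rightarrow> ('am \<Rightarrow> 'dm) \<Rightarrow> ('a \<Rightarrow> 'd) \<Rightarrow> ('am \<Rightarrow> 'dm) \<Rightarrow> ('a \<Rightarrow> 'dm) \<Rightarrow> bool" where
  "vert_nat_iso B A D po pa Fo Fa Go Ga eta \<longleftrightarrow>
     (\<forall>a\<in>obj A. eta a \<in> hom D (Fo a) (Go a) \<and> is_iso D (eta a) \<and>
        pa (eta a) = ident B (po (Fo a))) \<and>
     (\<forall>f\<in>arr A. comp D (eta (cod A f)) (Fa f) = comp D (Ga f) (eta (dom A f)))"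

definition equivalence_over ::
  "('c, 'cm) category \<Rightarrow> ('d, 'dm) category \<Rightarrow> ('d \<Rightarrow> 'c) \<Rightarrow> ('dm \<Rightarrow> 'cm) \<Rightarrow>
   ('d \<Rightarrow> 'd) \<Rightarrow> ('dm \<Rightarrow> 'dm) \<Rightarrow> bool" where
  "equivalence_over B D po pa Fo Fa \<longleftrightarrow>
     (\<exists>Go Ga eta eps.
        is_functor D D Go Ga \<and>
        (\<forall>x\<in>obj D. po (Go x) = po x) \<and> (\<forall>f\<in>arr D. pa (Ga f) = pa f) \<and>
        vert_nat_iso B D D po pa (Go \<circ> Fo) (Ga \<circ> Fa) id id eta \<and>
        vert_nat_iso B D D po pa (Fo \<circ> Go) (Fa \<circ> Ga) id id eps)"

record ('c, 'cm, 'h, 'hm) grp2 =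
  gcat :: "('h, 'hm) category"
  gprj_o :: "'h \<Rightarrow> 'c"
  gprj_a :: "'hm \<Rightarrow> 'cm"
  gunit_o :: "'c \<Rightarrow> 'h"
  gunit_a :: "'cm \<Rightarrow> 'hm"
  gtens_o :: "'h \<Rightarrow> 'h \<Rightarrow> 'h"
  gtens_a :: "'hm \<Rightarrow> 'hm \<Rightarrow> 'hm"
  gassoc :: "'h \<Rightarrow> 'h \<Rightarrow> 'h \<Rightarrow> 'hm"   \<comment> \<open>(x\<otimes>y)\<otimes>z \<rightarrow> x\<otimes>(y\<otimes>z)\<close>
  glunit :: "'h \<Rightarrow> 'hm"               \<comment> \<open>u(\<pi> x)\<otimes>x \<rightarrow> x\<close>
  grunit :: "'h \<Rightarrow> 'hm"               \<comment> \<open>x\<otimes>u(\<pi> x) \<rightarrow> x\<close>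

definition two_group_over :: "('c, 'cm) category \<Rightarrow> ('c, 'cm, 'h, 'hm) grp2 \<Rightarrow> bool" where
  "two_group_over B G \<longleftrightarrow>
    (let H = gcat G; po = gprj_o G; pa = gprj_a G; uo = gunit_o G; ua = gunit_a G;
         to = gtens_o G; ta = gtens_a G; al = gassoc G; l = glunit G; r = grunit G;
         HH = fibprod H po pa in
     is_category H \<and> fib_in_groupoids H B po pa \<and>
     \<comment> \<open>unit: a functor Cart \<rightarrow> H strictly over the base\<close>
     is_functor B H uo ua \<and> (\<forall>c\<in>obj B. po (uo c) = c) \<and> (\<forall>f\<in>arr B. pa (ua f) = f) \<and>
     \<comment> \<open>product: a functor H \<times>_B H \<rightarrow> H strictly over the base\<close>
     is_functor HH H (case_prod to) (case_prod ta) \<and>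
     (\<forall>(x, y)\<in>obj HH. po (to x y) = po x) \<and> (\<forall>(f, g)\<in>arr HH. pa (ta f g) = pa f) \<and>
     \<comment> \<open>associator: vertical natural isomorphism\<close>
     (\<forall>x\<in>obj H. \<forall>y\<in>obj H. \<forall>z\<in>obj H. po x = po y \<longrightarrow> po y = po z \<longrightarrow>
        al x y z \<in> hom H (to (to x y) z) (to x (to y z)) \<and> is_iso H (al x y z) \<and>
        pa (al x y z) = ident B (po x)) \<and>
     (\<forall>f\<in>arr H. \<forall>g\<in>arr H. \<forall>h\<in>arr H. pa f = pa g \<longrightarrow> pa g = pa h \<longrightarrow>
        comp H (al (cod H f) (cod H g) (cod H h)) (ta (ta f g) h) =
        comp H (ta f (ta g h)) (al (dom H f) (dom H g) (dom H h))) \<and>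
     \<comment> \<open>unitors: vertical natural isomorphisms\<close>
     (\<forall>x\<in>obj H. l x \<in> hom H (to (uo (po x)) x) x \<and> is_iso H (l x) \<and> pa (l x) = ident B (po x)) \<and>
     (\<forall>f\<in>arr H. comp H (l (cod H f)) (ta (ua (pa f)) f) = comp H f (l (dom H f))) \<and>
     (\<forall>x\<in>obj H. r x \<in> hom H (to x (uo (po x))) x \<and> is_iso H (r x) \<and> pa (r x) = ident B (po x)) \<and>
     (\<forall>f\<in>arr H. comp H (r (cod H f)) (ta f (ua (pa f))) = comp H f (r (dom H f))) \<and>
     \<comment> \<open>pentagon\<close>
     (\<forall>w\<in>obj H. \<forall>x\<in>obj H. \<forall>y\<in>obj H. \<forall>z\<in>obj H.
        po w = po x \<longrightarrow> po x = po y \<longrightarrow> po y = po z \<longrightarrow>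
        comp H (al w x (to y z)) (al (to w x) y z) =
        comp H (ta (ident H w) (al x y z)) (comp H (al w (to x y) z) (ta (al w x y) (ident H z)))) \<and>
     \<comment> \<open>triangle\<close>
     (\<forall>x\<in>obj H. \<forall>y\<in>obj H. po x = po y \<longrightarrow>
        comp H (ta (ident H x) (l y)) (al x (uo (po x)) y) = ta (r x) (ident H y)) \<and>
     \<comment> \<open>(\<otimes>, pr1) is an equivalence\<close>
     equivalence_over B HH (po \<circ> fst) (pa \<circ> fst)
        (\<lambda>(x, y). (to x y, x)) (\<lambda>(f, g). (ta f g, f)))"

record ('h, 'hm, 'c, 'k, 'km) grp2_hom =
  mfun_o :: "'h \<Rightarrow> 'k"
  mfun_a :: "'hm \<Rightarrow> 'km"
  mmu :: "'h \<Rightarrow> 'h \<Rightarrow> 'km"     \<comment> \<open>p x \<otimes> p y \<rightarrow> p (x \<otimes> y)\<close>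
  meps :: "'c \<Rightarrow> 'km"           \<comment> \<open>u_K c \<rightarrow> p (u_H c)\<close>

definition two_group_hom ::
  "('c, 'cm) category \<Rightarrow> ('c, 'cm, 'h, 'hm) grp2 \<Rightarrow> ('c, 'cm, 'k, 'km) grp2 \<Rightarrow>
   ('h, 'hm, 'c, 'k, 'km) grp2_hom \<Rightarrow> bool" where
  "two_group_hom B G K P \<longleftrightarrow>
    (let H = gcat G; KC = gcat K; fo = mfun_o P; fa = mfun_a P; mu = mmu P; e = meps P;
         toH = gtens_o G; taH = gtens_a G; toK = gtens_o K; taK = gtens_a K in
     is_functor H KC fo fa \<and>
     (\<forall>x\<in>obj H. gprj_o K (fo x) = gprj_o G x) \<and> (\<forall>f\<in>arr H. gprj_a K (fa f) = gprj_a G f) \<and>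
     (\<forall>x\<in>obj H. \<forall>y\<in>obj H. gprj_o G x = gprj_o G y \<longrightarrow>
        mu x y \<in> hom KC (toK (fo x) (fo y)) (fo (toH x y)) \<and> is_iso KC (mu x y) \<and>
        gprj_a K (mu x y) = ident B (gprj_o G x)) \<and>
     (\<forall>f\<in>arr H. \<forall>g\<in>arr H. gprj_a G f = gprj_a G g \<longrightarrow>
        comp KC (mu (cod H f) (cod H g)) (taK (fa f) (fa g)) =
        comp KC (fa (taH f g)) (mu (dom H f) (dom H g))) \<and>
     (\<forall>x\<in>obj H. \<forall>y\<in>obj H. \<forall>z\<in>obj H. gprj_o G x = gprj_o G y \<longrightarrow> gprj_o G y = gprj_o G z \<longrightarrow>
        comp KC (fa (gassoc G x y z)) (comp KC (mu (toH x y) z) (taK (mu x y) (ident KC (fo z)))) =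
        comp KC (mu x (toH y z)) (comp KC (taK (ident KC (fo x)) (mu y z))
          (gassoc K (fo x) (fo y) (fo z)))) \<and>
     (\<forall>c\<in>obj B. e c \<in> hom KC (gunit_o K c) (fo (gunit_o G c)) \<and> is_iso KC (e c) \<and>
        gprj_a K (e c) = ident B c) \<and>
     (\<forall>f\<in>arr B. comp KC (e (cod B f)) (gunit_a K f) = comp KC (fa (gunit_a G f)) (e (dom B f))) \<and>
     (\<forall>x\<in>obj H.
        comp KC (fa (glunit G x)) (comp KC (mu (gunit_o G (gprj_o G x)) x)
          (taK (e (gprj_o G x)) (ident KC (fo x)))) = glunit K (fo x)) \<and>
     (\<forall>x\<in>obj H.
        comp KC (fa (grunit G x)) (comp KC (mu x (gunit_o G (gprj_o G x)))
          (taK (ident KC (fo x)) (e (gprj_o G x)))) = grunit K (fo x)))"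

definition hker ::
  "('c, 'cm) category \<Rightarrow> ('c, 'cm, 'h, 'hm) grp2 \<Rightarrow> ('c, 'cm, 'k, 'km) grp2 \<Rightarrow>
   ('h, 'hm, 'c, 'k, 'km) grp2_hom \<Rightarrow>
   ('h \<times> 'km, ('h \<times> 'km) \<times> 'hm \<times> ('h \<times> 'km)) category" where
  "hker B G K P =
    (let H = gcat G; KC = gcat K; ob =
       {(h, eta). h \<in> obj H \<and> eta \<in> hom KC (mfun_o P h) (gunit_o K (gprj_o G h)) \<and>
          is_iso KC eta \<and> gprj_a K eta = ident B (gprj_o G h)} in
     \<lparr> obj = ob,
       arr = {(a, z, b). a \<in> ob \<and> b \<in> ob \<and> z \<in> hom H (fst a) (fst b) \<and>
                comp KC (snd b) (mfun_a P z) = comp KC (gunit_a K (gprj_a G z)) (snd a)},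
       dom = (\<lambda>(a, z, b). a),
       cod = (\<lambda>(a, z, b). b),
       ident = (\<lambda>a. (a, ident H (fst a), a)),
       comp = (\<lambda>(b', z', c) (a, z, b). (a, comp H z' z, c)) \<rparr>)"

definition hker_proj_o :: "('c, 'cm, 'h, 'hm) grp2 \<Rightarrow> 'h \<times> 'km \<Rightarrow> 'c" where
  "hker_proj_o G = (\<lambda>(h, eta). gprj_o G h)"

definition hker_proj_a :: "('c, 'cm, 'h, 'hm) grp2 \<Rightarrow> ('h \<times> 'km) \<times> 'hm \<times> ('h \<times> 'km) \<Rightarrow> 'cm" where
  "hker_proj_a G = (\<lambda>(a, z, b). gprj_a G z)"

section \<open>The category Cart (skeletal model: objects n stand for R^n)\<close>

definition Rn :: "nat \<Rightarrow> (nat \<Rightarrow> real) set" where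
  "Rn n = {x. \<forall>i\<ge>n. x i = 0}"

definition pderiv_Rn :: "((nat \<Rightarrow> real) \<Rightarrow> real) \<Rightarrow> nat \<Rightarrow> (nat \<Rightarrow> real) \<Rightarrow> real" where
  "pderiv_Rn \<phi> i x = deriv (\<lambda>t. \<phi> (x(i := x i + t))) 0"

fun Ck_Rn :: "nat \<Rightarrow> nat \<Rightarrow> ((nat \<Rightarrow> real) \<Rightarrow> real) \<Rightarrow> bool" where
  "Ck_Rn n 0 \<phi> = continuous_on (Rn n) \<phi>"
| "Ck_Rn n (Suc k) \<phi> = (continuous_on (Rn n) \<phi> \<and>
     (\<forall>i<n. \<forall>x\<in>Rn n. (\<lambda>t. \<phi> (x(i := x i + t))) differentiable (at 0)) \<and>
     (\<forall>i<n. Ck_Rn n k (pderiv_Rn \<phi> i)))"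

definition smooth_Rn :: "nat \<Rightarrow> ((nat \<Rightarrow> real) \<Rightarrow> real) \<Rightarrow> bool" where
  "smooth_Rn n \<phi> \<longleftrightarrow> (\<forall>k. Ck_Rn n k \<phi>)"

type_synonym cart_arr = "nat \<times> nat \<times> ((nat \<Rightarrow> real) \<Rightarrow> (nat \<Rightarrow> real))"

definition Cart :: "(nat, cart_arr) category" where
  "Cart =
     \<lparr> obj = UNIV,
       arr = {(n, m, f). (\<forall>x\<in>Rn n. f x \<in> Rn m) \<and> (\<forall>x. x \<notin> Rn n \<longrightarrow> f x = (\<lambda>_. 0)) \<and>
                         (\<forall>j<m. smooth_Rn n (\<lambda>x. f x j))},
       dom = (\<lambda>(n, m, f). n),
       cod = (\<lambda>(n, m, f). m),
       ident = (\<lambda>n. (n, n, \<lambda>x. if x \<in> Rn n then x else (\<lambda>_. 0))),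
       comp = (\<lambda>(m', k, g) (n, m, f). (n, k, \<lambda>x. if x \<in> Rn n then g (f x) else (\<lambda>_. 0))) \<rparr>"

definition smooth_2group :: "(nat, cart_arr, 'h, 'hm) grp2 \<Rightarrow> bool" where
  "smooth_2group G \<longleftrightarrow> two_group_over Cart G"

definition smooth_2group_hom ::
  "(nat, cart_arr, 'h, 'hm) grp2 \<Rightarrow> (nat, cart_arr, 'k, 'km) grp2 \<Rightarrow>
   ('h, 'hm, nat, 'k, 'km) grp2_hom \<Rightarrow> bool" where
  "smooth_2group_hom G K P \<longleftrightarrow> smooth_2group G \<and> smooth_2group K \<and> two_group_hom Cart G K P"

end

theory Submission imports Defs begin

lemma cat_facts:
  assumes "is_category C"
  shows "\<And>f. f \<in> arr C \<Longrightarrow> dom C f \<in> obj C \<and> cod C f \<in> obj C"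
    and "\<And>a. a \<in> obj C \<Longrightarrow> ident C a \<in> hom C a a"
    and "\<And>f g. f \<in> arr C \<Longrightarrow> g \<in> arr C \<Longrightarrow> cod C f = dom C g \<Longrightarrow> comp C g f \<in> hom C (dom C f) (cod C g)"
    and "\<And>f. f \<in> arr C \<Longrightarrow> comp C f (ident C (dom C f)) = f"
    and "\<And>f. f \<in> arr C \<Longrightarrow> comp C (ident C (cod C f)) f = f"
    and "\<And>f g h. f \<in> arr C \<Longrightarrow> g \<in> arr C \<Longrightarrow> h \<in> arr C \<Longrightarrow> cod C f = dom C g \<Longrightarrow> cod C g = dom C h \<Longrightarrow>
        comp C h (comp C g f) = comp C (comp C h g) f"
  using assms unfolding is_category_def by blast+

lemma functor_facts:
  assumes "is_functor C D Fo Fa"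
  shows "\<And>f. f \<in> arr C \<Longrightarrow> Fa f \<in> hom D (Fo (dom C f)) (Fo (cod C f))"
    and "\<And>a. a \<in> obj C \<Longrightarrow> Fa (ident C a) = ident D (Fo a)"
    and "\<And>f g. f \<in> arr C \<Longrightarrow> g \<in> arr C \<Longrightarrow> cod C f = dom C g \<Longrightarrow> Fa (comp C g f) = comp D (Fa g) (Fa f)"
    and "\<And>a. a \<in> obj C \<Longrightarrow> Fo a \<in> obj D"
  using assms unfolding is_functor_def by blast+

lemma fib_facts:
  assumes "fib_in_groupoids D C po pa"
  shows "is_functor D C po pa"
   and "\<And>d c f. d \<in> obj D \<Longrightarrow> f \<in> hom C c (po d) \<Longrightarrow> \<exists>c' f'. f' \<in> hom D c' d \<and> pa f' = f"
   and "\<And>z12 z02 f01. z12 \<in> arr D \<Longrightarrow> z02 \<in> arr D \<Longrightarrow> cod D z12 = cod D z02 \<Longrightarrow>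
        f01 \<in> hom C (po (dom D z02)) (po (dom D z12)) \<Longrightarrow>
        comp C (pa z12) f01 = pa z02 \<Longrightarrow>
        (\<exists>!g. g \<in> hom D (dom D z02) (dom D z12) \<and> pa g = f01 \<and> comp D z12 g = z02)"
  using assms unfolding fib_in_groupoids_def by blast+

lemma vert_iso:
  assumes cat: "is_category C" and fib: "fib_in_groupoids C B po pa"
    and g: "g \<in> hom C x y" and pg: "pa g = ident B c" and px: "po x = c" and py: "po y = c"
    and idl: "comp B (ident B c) (ident B c) = ident B c"
  shows "is_iso C g"
proof -
  note F = functor_facts[OF fib_facts(1)[OF fib]]
  note Ca = cat_facts[OF cat]
  have garr: "g \<in> arr C" "dom C g = x" "cod C g = y" using g by (auto simp: hom_def)
  have xo: "x \<in> obj C" and yo: "y \<in> obj C" using Ca(1)[OF garr(1)] garr by auto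
  have idB: "ident B c \<in> hom B c c" using F(1)[OF Ca(2)[OF xo, unfolded hom_def, THEN CollectD, THEN conjunct1]]
      F(2)[OF xo] Ca(2)[OF xo] px by (auto simp: hom_def)
  have "\<exists>h. h \<in> hom C y x \<and> pa h = ident B c \<and> comp C g h = ident C y"
  proof -
    have iy: "ident C y \<in> hom C y y" using Ca(2)[OF yo] .
    have "\<exists>!h. h \<in> hom C (dom C (ident C y)) (dom C g) \<and> pa h = ident B c \<and> comp C g h = ident C y"
      apply (rule fib_facts(3)[OF fib])
      using garr iy idB px py idl pg F(2)[OF yo] by (auto simp: hom_def)
    then show ?thesis using iy garr by (auto simp: hom_def)
  qed
  then obtain h where h: "h \<in> hom C y x" "pa h = ident B c" "comp C g h = ident C y" by blast
  have harr: "h \<in> arr C" "dom C h = y" "cod C h = x" using h by (auto simp: hom_def)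
  have "\<exists>k. k \<in> hom C x y \<and> pa k = ident B c \<and> comp C h k = ident C x"
  proof -
    have ix: "ident C x \<in> hom C x x" using Ca(2)[OF xo] .
    have "\<exists>!k. k \<in> hom C (dom C (ident C x)) (dom C h) \<and> pa k = ident B c \<and> comp C h k = ident C x"
      apply (rule fib_facts(3)[OF fib])
      using harr ix idB px py idl F(2)[OF xo] h by (auto simp: hom_def)
    then show ?thesis using ix harr by (auto simp: hom_def)
  qed
  then obtain k where k: "k \<in> hom C x y" "pa k = ident B c" "comp C h k = ident C x" by blast
  have karr: "k \<in> arr C" "dom C k = x" "cod C k = y" using k by (auto simp: hom_def)
  have "k = comp C (ident C y) k" using Ca(5)[OF karr(1)] karr by simp
  also have "\<dots> = comp C (comp C g h) k" using h by simp
  also have "\<dots> = comp C g (comp C h k)" using Ca(6)[OF karr(1) harr(1) garr(1)] karr harr garr by simp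
  also have "\<dots> = comp C g (ident C x)" using k by simp
  also have "\<dots> = g" using Ca(4)[OF garr(1)] garr by simp
  finally have "k = g" .
  then show ?thesis unfolding is_iso_def using garr h k by auto
qed

lemma main:
  fixes G :: "('c,'cm,'h,'hm) grp2" and K :: "('c,'cm,'k,'km) grp2"
    and P :: "('h, 'hm, 'c, 'k, 'km) grp2_hom" and B :: "('c,'cm) category"
  assumes HG: "gcat G = H" and KK: "gcat K = KC" and pHo: "gprj_o G = poH" and pHa: "gprj_a G = paH"
    and pKo: "gprj_o K = poK" and pKa: "gprj_a K = paK" and uoD: "gunit_o K = uo" and uaD: "gunit_a K = ua"
    and foD: "mfun_o P = fo" and faD: "mfun_a P = fa"
    and catH: "is_category H" and catK: "is_category KC"
    and fibH: "fib_in_groupoids H B poH paH"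
    and fibK: "fib_in_groupoids KC B poK paK"
    and uF: "is_functor B KC uo ua" and uo: "\<forall>c\<in>obj B. poK (uo c) = c" and ua: "\<forall>f\<in>arr B. paK (ua f) = f"
    and pF: "is_functor H KC fo fa" and po: "\<forall>x\<in>obj H. poK (fo x) = poH x"
    and pa: "\<forall>f\<in>arr H. paK (fa f) = paH f"
    and Bl: "\<forall>f\<in>arr B. comp B f (ident B (dom B f)) = f"
    and Br: "\<forall>f\<in>arr B. comp B (ident B (cod B f)) f = f"
  shows "fib_in_groupoids (hker B G K P) B (hker_proj_o G) (hker_proj_a G)"
proof -
  define ob where "ob = {(h, eta). h \<in> obj H \<and> eta \<in> hom KC (fo h) (uo (poH h)) \<and>
          is_iso KC eta \<and> paK eta = ident B (poH h)}"
  have hk_obj: "obj (hker B G K P) = ob" and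
    hk_arr: "arr (hker B G K P) = {(a, z, b). a \<in> ob \<and> b \<in> ob \<and> z \<in> hom H (fst a) (fst b) \<and>
                comp KC (snd b) (fa z) = comp KC (ua (paH z)) (snd a)}" and
    hk_dom: "dom (hker B G K P) = (\<lambda>(a, z, b). a)" and
    hk_cod: "cod (hker B G K P) = (\<lambda>(a, z, b). b)" and
    hk_id: "ident (hker B G K P) = (\<lambda>a. (a, ident H (fst a), a))" and
    hk_comp: "comp (hker B G K P) = (\<lambda>(b', z', c) (a, z, b). (a, comp H z' z, c))"
    by (simp_all add: hker_def Let_def ob_def HG KK pHo pHa pKo pKa uoD uaD foD faD)
  have prjo: "hker_proj_o G = (\<lambda>(h, eta). poH h)" by (simp add: hker_proj_o_def pHo)
  have prja: "hker_proj_a G = (\<lambda>(a, z, b). paH z)" by (simp add: hker_proj_a_def pHa)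
  note FH = functor_facts[OF fib_facts(1)[OF fibH]]
  note FK = functor_facts[OF fib_facts(1)[OF fibK]]
  note FU = functor_facts[OF uF]
  note FP = functor_facts[OF pF]
  note CH = cat_facts[OF catH]
  note CK = cat_facts[OF catK]
  have hfun: "is_functor (hker B G K P) B (hker_proj_o G) (hker_proj_a G)"
    unfolding is_functor_def
  proof (intro conjI ballI impI)
    fix a assume "a \<in> obj (hker B G K P)"
    then show "hker_proj_o G a \<in> obj B" using FH(4) by (auto simp: hk_obj ob_def prjo)
  next
    fix f assume "f \<in> arr (hker B G K P)"
    then show "hker_proj_a G f \<in> hom B (hker_proj_o G (dom (hker B G K P) f)) (hker_proj_o G (cod (hker B G K P) f))"
      using FH(1) by (auto simp: hk_arr hk_dom hk_cod prjo prja hom_def)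
  next
    fix a assume "a \<in> obj (hker B G K P)"
    then show "hker_proj_a G (ident (hker B G K P) a) = ident B (hker_proj_o G a)"
      using FH(2) by (auto simp: hk_obj ob_def prjo prja hk_id)
  next
    fix f g assume "f \<in> arr (hker B G K P)" "g \<in> arr (hker B G K P)" "cod (hker B G K P) f = dom (hker B G K P) g"
    then show "hker_proj_a G (comp (hker B G K P) g f) = comp B (hker_proj_a G g) (hker_proj_a G f)"
      using FH(3) by (auto simp: hk_arr hk_dom hk_cod prja hk_comp hom_def)
  qed
  have ccid: "\<And>c. c \<in> obj B \<Longrightarrow> ident B c \<in> hom B c c"
  proof -
    fix c assume "c \<in> obj B"
    then have "paK (ident KC (uo c)) = ident B c" "uo c \<in> obj KC" using FK(2) FU(4) uo by auto
    then show "ident B c \<in> hom B c c" using FK(1)[of "ident KC (uo c)"] CK(2)[of "uo c"] uo \<open>c \<in> obj B\<close>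
      by (auto simp: hom_def)
  qed
  have lifts: "\<forall>d\<in>obj (hker B G K P). \<forall>c f. f \<in> hom B c (hker_proj_o G d) \<longrightarrow>
        (\<exists>c' f'. f' \<in> hom (hker B G K P) c' d \<and> hker_proj_a G f' = f)"
  proof (intro ballI allI impI)
    fix d c f assume d: "d \<in> obj (hker B G K P)" and f: "f \<in> hom B c (hker_proj_o G d)"
    obtain h eta where deq: "d = (h, eta)" by (cases d)
    have h: "h \<in> obj H" and eta: "eta \<in> hom KC (fo h) (uo (poH h))" "is_iso KC eta"
      "paK eta = ident B (poH h)" using d by (auto simp: deq hk_obj ob_def)
    have f': "f \<in> hom B c (poH h)" using f by (simp add: deq prjo)
    obtain h' z where z: "z \<in> hom H h' h" "paH z = f" using fib_facts(2)[OF fibH h f'] by blast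
    have zarr: "z \<in> arr H" "dom H z = h'" "cod H z = h" using z by (auto simp: hom_def)
    have h': "h' \<in> obj H" using CH(1)[OF zarr(1)] zarr by simp
    have ch': "poH h' = c" using FH(1)[OF zarr(1)] z f' zarr by (auto simp: hom_def)
    have cB: "c \<in> obj B" using FH(4)[OF h'] ch' by simp
    have farr: "f \<in> arr B" "dom B f = c" "cod B f = poH h" using f' by (auto simp: hom_def)
    have uaf: "ua f \<in> hom KC (uo c) (uo (poH h))" using FU(1)[OF farr(1)] farr by simp
    have faz: "fa z \<in> hom KC (fo h') (fo h)" using FP(1)[OF zarr(1)] zarr by simp
    have Z02: "comp KC eta (fa z) \<in> hom KC (fo h') (uo (poH h))"
      using CK(3)[of "fa z" eta] faz eta by (auto simp: hom_def)
    have idc: "ident B c \<in> hom B c c" using ccid[OF cB] .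
    have pfaz: "paK (fa z) = f" using pa zarr z by simp
    have "paK (comp KC eta (fa z)) = comp B (paK eta) (paK (fa z))"
      using FK(3)[of "fa z" eta] faz eta by (auto simp: hom_def)
    also have "\<dots> = f" using eta pfaz Br farr by force
    finally have pZ02: "paK (comp KC eta (fa z)) = f" .
    have "\<exists>!g. g \<in> hom KC (dom KC (comp KC eta (fa z))) (dom KC (ua f)) \<and> paK g = ident B c \<and>
            comp KC (ua f) g = comp KC eta (fa z)"
      apply (rule fib_facts(3)[OF fibK])
      using uaf Z02 idc pZ02 Bl farr ua uo po h' ch' cB by (auto simp: hom_def)
    then obtain g where g: "g \<in> hom KC (fo h') (uo c)" "paK g = ident B c"
        "comp KC (ua f) g = comp KC eta (fa z)"
      using uaf Z02 by (auto simp: hom_def)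
    have gi: "is_iso KC g"
      apply (rule vert_iso[OF catK fibK g(1) g(2)])
      using po h' ch' uo cB Bl idc by (auto simp: hom_def)
    have "((h', g), z, (h, eta)) \<in> hom (hker B G K P) (h', g) d \<and> hker_proj_a G ((h', g), z, (h, eta)) = f"
      using h h' eta g gi ch' z zarr
      by (auto simp: hom_def hk_arr hk_dom hk_cod ob_def deq prja)
    then show "\<exists>c' f'. f' \<in> hom (hker B G K P) c' d \<and> hker_proj_a G f' = f" by blast
  qed
  have cart: "\<forall>z12\<in>arr (hker B G K P). \<forall>z02\<in>arr (hker B G K P). \<forall>f01.
        cod (hker B G K P) z12 = cod (hker B G K P) z02 \<longrightarrow>
        f01 \<in> hom B (hker_proj_o G (dom (hker B G K P) z02)) (hker_proj_o G (dom (hker B G K P) z12)) \<longrightarrow>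
        comp B (hker_proj_a G z12) f01 = hker_proj_a G z02 \<longrightarrow>
        (\<exists>!g. g \<in> hom (hker B G K P) (dom (hker B G K P) z02) (dom (hker B G K P) z12) \<and>
           hker_proj_a G g = f01 \<and> comp (hker B G K P) z12 g = z02)"
  proof (intro ballI allI impI)
    fix z12 z02 f01
    assume z12: "z12 \<in> arr (hker B G K P)" and z02: "z02 \<in> arr (hker B G K P)"
      and ceq: "cod (hker B G K P) z12 = cod (hker B G K P) z02"
      and f01: "f01 \<in> hom B (hker_proj_o G (dom (hker B G K P) z02)) (hker_proj_o G (dom (hker B G K P) z12))"
      and cf: "comp B (hker_proj_a G z12) f01 = hker_proj_a G z02"
    obtain h1 e1 z1 h2 e2 where z12e: "z12 = ((h1, e1), z1, (h2, e2))" by (metis prod.exhaust)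
    obtain h0 e0 z0 h2' e2' where z02e: "z02 = ((h0, e0), z0, (h2', e2'))" by (metis prod.exhaust)
    have e2': "h2' = h2" "e2' = e2" using ceq by (auto simp: z12e z02e hk_cod)
    have o0: "h0 \<in> obj H" "e0 \<in> hom KC (fo h0) (uo (poH h0))" "paK e0 = ident B (poH h0)"
      using z02 by (auto simp: z02e hk_arr ob_def)
    have o1: "h1 \<in> obj H" "e1 \<in> hom KC (fo h1) (uo (poH h1))" "paK e1 = ident B (poH h1)"
      using z12 by (auto simp: z12e hk_arr ob_def)
    have o2: "h2 \<in> obj H" "e2 \<in> hom KC (fo h2) (uo (poH h2))" "paK e2 = ident B (poH h2)"
      using z12 by (auto simp: z12e hk_arr ob_def)
    have z1: "z1 \<in> hom H h1 h2" "comp KC e2 (fa z1) = comp KC (ua (paH z1)) e1"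
      using z12 by (auto simp: z12e hk_arr)
    have z0: "z0 \<in> hom H h0 h2" "comp KC e2 (fa z0) = comp KC (ua (paH z0)) e0"
      using z02 by (auto simp: z02e e2' hk_arr)
    have f01': "f01 \<in> hom B (poH h0) (poH h1)" using f01 by (simp add: z12e z02e hk_dom prjo)
    have cf': "comp B (paH z1) f01 = paH z0" using cf by (simp add: z12e z02e prja)
    have z1a: "z1 \<in> arr H" "dom H z1 = h1" "cod H z1 = h2" using z1 by (auto simp: hom_def)
    have z0a: "z0 \<in> arr H" "dom H z0 = h0" "cod H z0 = h2" using z0 by (auto simp: hom_def)
    have fa01: "f01 \<in> arr B" "dom B f01 = poH h0" "cod B f01 = poH h1" using f01' by (auto simp: hom_def)
    have "\<exists>!w. w \<in> hom H h0 h1 \<and> paH w = f01 \<and> comp H z1 w = z0"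
      using fib_facts(3)[OF fibH z1a(1) z0a(1)] z1a(2,3) z0a(2,3) f01' cf' by simp
    then obtain w where w: "w \<in> hom H h0 h1" "paH w = f01" "comp H z1 w = z0"
      and wu: "\<And>w'. w' \<in> hom H h0 h1 \<Longrightarrow> paH w' = f01 \<Longrightarrow> comp H z1 w' = z0 \<Longrightarrow> w' = w"
      by (elim ex1E) blast
    have wa: "w \<in> arr H" "dom H w = h0" "cod H w = h1" using w by (auto simp: hom_def)
    have pz1: "paH z1 \<in> hom B (poH h1) (poH h2)" using FH(1)[OF z1a(1)] z1a by simp
    have pz0: "paH z0 \<in> hom B (poH h0) (poH h2)" using FH(1)[OF z0a(1)] z0a by simp
    have U1: "ua (paH z1) \<in> hom KC (uo (poH h1)) (uo (poH h2))"
      using FU(1)[of "paH z1"] pz1 by (auto simp: hom_def)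
    have U0: "ua (paH z0) \<in> hom KC (uo (poH h0)) (uo (poH h2))"
      using FU(1)[of "paH z0"] pz0 by (auto simp: hom_def)
    have Uf: "ua f01 \<in> hom KC (uo (poH h0)) (uo (poH h1))"
      using FU(1)[of f01] fa01 by (auto simp: hom_def)
    have faw: "fa w \<in> hom KC (fo h0) (fo h1)" using FP(1)[OF wa(1)] wa by simp
    have faz1: "fa z1 \<in> hom KC (fo h1) (fo h2)" using FP(1)[OF z1a(1)] z1a by simp
    have Z02: "comp KC (ua (paH z0)) e0 \<in> hom KC (fo h0) (uo (poH h2))"
      using CK(3)[of e0 "ua (paH z0)"] U0 o0 by (auto simp: hom_def)
    have X: "comp KC e1 (fa w) \<in> hom KC (fo h0) (uo (poH h1))"
      using CK(3)[of "fa w" e1] faw o1 by (auto simp: hom_def)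
    have Y: "comp KC (ua f01) e0 \<in> hom KC (fo h0) (uo (poH h1))"
      using CK(3)[of e0 "ua f01"] Uf o0 by (auto simp: hom_def)
    have pB0: "poH h0 \<in> obj B" "poH h1 \<in> obj B" "poH h2 \<in> obj B" using FH(4) o0 o1 o2 by auto
    have pfaw: "paK (fa w) = f01" using pa wa w by simp
    have pX: "paK (comp KC e1 (fa w)) = f01"
    proof -
      have "paK (comp KC e1 (fa w)) = comp B (paK e1) (paK (fa w))"
        using FK(3)[of "fa w" e1] faw o1 by (auto simp: hom_def)
      then show ?thesis using o1 pfaw Br fa01 by force
    qed
    have pY: "paK (comp KC (ua f01) e0) = f01"
    proof -
      have "paK (comp KC (ua f01) e0) = comp B (paK (ua f01)) (paK e0)"
        using FK(3)[of e0 "ua f01"] Uf o0 by (auto simp: hom_def)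
      then show ?thesis using o0 ua Bl fa01 by force
    qed
    have pZ02: "paK (comp KC (ua (paH z0)) e0) = paH z0"
    proof -
      have "paK (comp KC (ua (paH z0)) e0) = comp B (paK (ua (paH z0))) (paK e0)"
        using FK(3)[of e0 "ua (paH z0)"] U0 o0 by (auto simp: hom_def)
      then show ?thesis using o0 ua Bl pz0 by (force simp: hom_def)
    qed
    have cX: "comp KC (ua (paH z1)) (comp KC e1 (fa w)) = comp KC (ua (paH z0)) e0"
    proof -
      have "comp KC (ua (paH z1)) (comp KC e1 (fa w)) = comp KC (comp KC (ua (paH z1)) e1) (fa w)"
        using CK(6)[of "fa w" e1 "ua (paH z1)"] faw o1 U1 by (auto simp: hom_def)
      also have "\<dots> = comp KC (comp KC e2 (fa z1)) (fa w)" using z1 by simp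
      also have "\<dots> = comp KC e2 (comp KC (fa z1) (fa w))"
        using CK(6)[of "fa w" "fa z1" e2] faw faz1 o2 by (auto simp: hom_def)
      also have "\<dots> = comp KC e2 (fa (comp H z1 w))" using FP(3)[OF wa(1) z1a(1)] wa z1a by simp
      also have "\<dots> = comp KC (ua (paH z0)) e0" using w z0 by simp
      finally show ?thesis .
    qed
    have cY: "comp KC (ua (paH z1)) (comp KC (ua f01) e0) = comp KC (ua (paH z0)) e0"
    proof -
      have "comp KC (ua (paH z1)) (comp KC (ua f01) e0) = comp KC (comp KC (ua (paH z1)) (ua f01)) e0"
        using CK(6)[of e0 "ua f01" "ua (paH z1)"] Uf o0 U1 by (auto simp: hom_def)
      also have "\<dots> = comp KC (ua (comp B (paH z1) f01)) e0"
        using FU(3)[of f01 "paH z1"] fa01 pz1 by (auto simp: hom_def)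
      also have "\<dots> = comp KC (ua (paH z0)) e0" using cf' by simp
      finally show ?thesis .
    qed
    have pU1: "paK (ua (paH z1)) = paH z1" using ua pz1 by (auto simp: hom_def)
    have "\<exists>!g. g \<in> hom KC (dom KC (comp KC (ua (paH z0)) e0)) (dom KC (ua (paH z1))) \<and> paK g = f01 \<and>
            comp KC (ua (paH z1)) g = comp KC (ua (paH z0)) e0"
      apply (rule fib_facts(3)[OF fibK])
      using U1 Z02 f01' pZ02 cf' pU1 po uo o0 o1 pB0 by (auto simp: hom_def)
    then have key: "comp KC e1 (fa w) = comp KC (ua f01) e0"
      using X Y pX pY cX cY U1 Z02 by (auto simp: hom_def)
    define g where "g = ((h0, e0), w, (h1, e1))"
    show "\<exists>!g. g \<in> hom (hker B G K P) (dom (hker B G K P) z02) (dom (hker B G K P) z12) \<and>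
           hker_proj_a G g = f01 \<and> comp (hker B G K P) z12 g = z02"
    proof (rule ex1I[of _ g])
      show "g \<in> hom (hker B G K P) (dom (hker B G K P) z02) (dom (hker B G K P) z12) \<and>
           hker_proj_a G g = f01 \<and> comp (hker B G K P) z12 g = z02"
        using z12 z02 w key by (auto simp: g_def hom_def hk_arr hk_dom hk_cod hk_comp prja z12e z02e e2')
    next
      fix g' assume g': "g' \<in> hom (hker B G K P) (dom (hker B G K P) z02) (dom (hker B G K P) z12) \<and>
           hker_proj_a G g' = f01 \<and> comp (hker B G K P) z12 g' = z02"
      obtain a w' b where g'e: "g' = (a, w', b)" by (cases g')
      have ab: "a = (h0, e0)" "b = (h1, e1)" "w' \<in> hom H h0 h1" "paH w' = f01" "comp H z1 w' = z0"
        using g' by (auto simp: g'e hom_def hk_arr hk_dom hk_cod hk_comp prja z12e z02e)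
      then show "g' = g" using wu[of w'] by (simp add: g'e g_def)
    qed
  qed
  show ?thesis unfolding fib_in_groupoids_def using hfun lifts cart by blast
qed

lemma Cart_idl: "\<forall>f\<in>arr Cart. comp Cart f (ident Cart (dom Cart f)) = f"
  by (auto simp: Cart_def fun_eq_iff)

lemma Cart_idr: "\<forall>f\<in>arr Cart. comp Cart (ident Cart (cod Cart f)) f = f"
  by (auto simp: Cart_def fun_eq_iff)

theorem lemma5p18:
  fixes G :: "(nat, cart_arr, 'h, 'hm) grp2"
    and K :: "(nat, cart_arr, 'k, 'km) grp2"
    and P :: "('h, 'hm, nat, 'k, 'km) grp2_hom"
  assumes "smooth_2group_hom G K P"
  shows "fib_in_groupoids (hker Cart G K P) Cart (hker_proj_o G) (hker_proj_a G)"
proof -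
  have g: "two_group_over Cart G" and k: "two_group_over Cart K" and p: "two_group_hom Cart G K P"
    using assms by (auto simp: smooth_2group_hom_def smooth_2group_def)
  have g1: "is_category (gcat G)" using g unfolding two_group_over_def Let_def by (elim conjE) assumption
  have g2: "fib_in_groupoids (gcat G) Cart (gprj_o G) (gprj_a G)" using g unfolding two_group_over_def Let_def by (elim conjE) assumption
  have k1: "is_category (gcat K)" using k unfolding two_group_over_def Let_def by (elim conjE) assumption
  have k2: "fib_in_groupoids (gcat K) Cart (gprj_o K) (gprj_a K)" using k unfolding two_group_over_def Let_def by (elim conjE) assumption
  have k3: "is_functor Cart (gcat K) (gunit_o K) (gunit_a K)" using k unfolding two_group_over_def Let_def by (elim conjE) assumption
  have k4: "\<forall>c\<in>obj Cart. gprj_o K (gunit_o K c) = c" using k unfolding two_group_over_def Let_def by (elim conjE) assumption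
  have k5: "\<forall>f\<in>arr Cart. gprj_a K (gunit_a K f) = f" using k unfolding two_group_over_def Let_def by (elim conjE) assumption
  have p1: "is_functor (gcat G) (gcat K) (mfun_o P) (mfun_a P)" using p unfolding two_group_hom_def Let_def by (elim conjE) assumption
  have p2: "\<forall>x\<in>obj (gcat G). gprj_o K (mfun_o P x) = gprj_o G x" using p unfolding two_group_hom_def Let_def by (elim conjE) assumption
  have p3: "\<forall>f\<in>arr (gcat G). gprj_a K (mfun_a P f) = gprj_a G f" using p unfolding two_group_hom_def Let_def by (elim conjE) assumption
  show ?thesis
    by (rule main[OF refl refl refl refl refl refl refl refl refl refl g1 k1 g2 k2 k3 k4 k5 p1 p2 p3 Cart_idl Cart_idr])
qed

end
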